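(* Let $(V,\mathcal{G},\mathcal{B})$ be a $(v,g,k,\lambda)_q$-GDD with $2\le g\le k$. Then $q^{k-g}$ divides $\lambda$.
   Context: Let $q$ be a prime power and $v,g,k,\lambda$ positive integers. A $(v,g,k,\lambda)_q$-GDD ($q$-analog of a group divisible design) is a triple $(V,\mathcal{G},\mathcal{B})$ where $V$ is a $v$-dimensional vector space over $\mathrm{GF}(q)$; $\mathcal{G}$ is a set of $g$-dimensional subspaces of $V$ (groups) such that every $1$-dimensional subspace of $V$ lies in exactly one element of $\mathcal{G}$, and $\#\mathcal{G}>1$; $\mathcal{B}$ is a set of $k$-dimensional subspaces of $V$ (blocks); and every $2$-dimensional subspace of $V$ is either contained in exactly one element of $\mathcal{G}$ and in no block, or contained in no element of $\mathcal{G}$ and in exactly $\lambda$ blocks. *)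

theory Defs
  imports "HOL-Analysis.Cartesian_Space"
begin

text \<open>The ambient space V is the standard space ('a^'n) over the finite field 'a
  (so q = CARD('a), v = CARD('n)).\<close>

definition subspaces_of_dim :: "nat \<Rightarrow> ('a::field ^ 'n) set set" where
  "subspaces_of_dim d = {S. vec.subspace S \<and> vec.dim S = d}"

definition is_q_GDD ::
  "nat \<Rightarrow> nat \<Rightarrow> nat \<Rightarrow> ('a::{finite,field} ^ 'n) set set \<Rightarrow> ('a ^ 'n) set set \<Rightarrow> bool" where
  "is_q_GDD g k lam G B \<longleftrightarrow>
     0 < g \<and> 0 < k \<and> 0 < lam \<and>
     G \<subseteq> subspaces_of_dim g \<and>
     (\<forall>P \<in> subspaces_of_dim 1. \<exists>!X. X \<in> G \<and> P \<subseteq> X) \<and>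
     card G > 1 \<and>
     B \<subseteq> subspaces_of_dim k \<and>
     (\<forall>L \<in> subspaces_of_dim 2.
        ((\<exists>!X. X \<in> G \<and> L \<subseteq> X) \<and> (\<forall>b \<in> B. \<not> L \<subseteq> b)) \<or>
        ((\<forall>X \<in> G. \<not> L \<subseteq> X) \<and> card {b \<in> B. L \<subseteq> b} = lam))"

end

theory Submission
  imports Defs
begin

lemma card_span_indep:
  fixes B :: "('a::{finite,field} ^ 'n) set"
  assumes "vec.independent B"
  shows "card (vec.span B) = CARD('a) ^ card B"
proof -
  have "finite B" by simp
  then show ?thesis using assms
  proof (induction B rule: finite_induct)
    case empty
    then show ?case by (simp add: vec.span_empty)
  next
    case (insert a B)
    have indB: "vec.independent B" and an: "a \<notin> vec.span B"
      using insert.prems insert.hyps(2) by (auto simp: vec.independent_insert)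
    have bij: "bij_betw (\<lambda>(c, w). c *s a + w) ((UNIV::'a set) \<times> vec.span B) (vec.span (insert a B))"
    proof (rule bij_betwI')
      fix p1 p2 assume p: "p1 \<in> (UNIV::'a set) \<times> vec.span B" "p2 \<in> (UNIV::'a set) \<times> vec.span B"
      obtain c1 w1 where 1: "p1 = (c1, w1)" by force
      obtain c2 w2 where 2: "p2 = (c2, w2)" by force
      show "((\<lambda>(c, w). c *s a + w) p1 = (\<lambda>(c, w). c *s a + w) p2) = (p1 = p2)"
      proof
        assume eq: "(\<lambda>(c, w). c *s a + w) p1 = (\<lambda>(c, w). c *s a + w) p2"
        hence e: "(c1 - c2) *s a = w2 - w1" using 1 2 by (simp add: algebra_simps vector_sub_rdistrib)
        have "w2 - w1 \<in> vec.span B" using p 1 2 by (simp add: vec.span_diff)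
        have "c1 = c2"
        proof (rule ccontr)
          assume "c1 \<noteq> c2"
          hence "a = inverse (c1 - c2) *s (w2 - w1)" using e
            by (metis eq_iff_diff_eq_0 vector_smult_assoc vector_smult_lid field_class.field_inverse)
          hence "a \<in> vec.span B" using \<open>w2 - w1 \<in> vec.span B\<close> by (simp add: vec.span_scale)
          with an show False by simp
        qed
        then show "p1 = p2" using eq 1 2 by simp
      qed simp
    next
      fix p assume pin: "p \<in> (UNIV::'a set) \<times> vec.span B"
      show "(\<lambda>(c, w). c *s a + w) p \<in> vec.span (insert a B)"
      proof (cases p)
        case (Pair c w)
        from pin have "w \<in> vec.span (insert a B)" using Pair vec.span_mono[of B "insert a B"] by auto
        moreover have "c *s a \<in> vec.span (insert a B)" by (simp add: vec.span_base vec.span_scale)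
        ultimately show ?thesis using Pair by (simp add: vec.span_add)
      qed
    next
      fix y assume "y \<in> vec.span (insert a B)"
      then obtain c where "y - c *s a \<in> vec.span B" by (auto simp: vec.span_breakdown_eq)
      then show "\<exists>p \<in> (UNIV::'a set) \<times> vec.span B. y = (\<lambda>(c, w). c *s a + w) p"
        by (intro bexI[of _ "(c, y - c *s a)"]) auto
    qed
    have "card (vec.span (insert a B)) = card ((UNIV::'a set) \<times> vec.span B)"
      using bij_betw_same_card[OF bij] by simp
    also have "\<dots> = CARD('a) * CARD('a) ^ card B"
      using insert.IH[OF indB] by (simp add: card_cartesian_product)
    finally show ?case using insert.hyps by simp
  qed
qed

lemma card_subspace:
  fixes S :: "('a::{finite,field} ^ 'n) set"
  assumes "vec.subspace S"
  shows "card S = CARD('a) ^ vec.dim S"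
proof -
  obtain B where B: "B \<subseteq> S" "vec.independent B" "S \<subseteq> vec.span B" "card B = vec.dim S"
    using vec.basis_exists by blast
  have "vec.span B = S" using B assms by (meson vec.span_minimal subset_antisym)
  then show ?thesis using card_span_indep[OF B(2)] B(4) by simp
qed

lemma fiber_card:
  fixes S :: "('a::{finite,field} ^ 'n) set" and f :: "'a ^ 'n \<Rightarrow> 'a"
  assumes add: "\<And>u w. f (u + w) = f u + f w"
    and scl: "\<And>c u. f (c *s u) = c * f u"
    and S: "vec.subspace S" and a: "a \<in> S" "f a \<noteq> 0"
  shows "card S = CARD('a) * card {y \<in> S. f y = 1}"
proof -
  define a' where "a' = inverse (f a) *s a"
  have a'S: "a' \<in> S" using a S by (simp add: a'_def vec.subspace_scale)
  have fa': "f a' = 1" using a by (simp add: a'_def scl)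
  have fsub: "f (u - w) = f u - f w" for u w
    using add[of "u - w" w] by simp
  have bij: "bij_betw (\<lambda>(c, w). w + (c - 1) *s a') ((UNIV::'a set) \<times> {y \<in> S. f y = 1}) S"
  proof (rule bij_betwI')
    fix p1 p2 assume p: "p1 \<in> (UNIV::'a set) \<times> {y \<in> S. f y = 1}" "p2 \<in> (UNIV::'a set) \<times> {y \<in> S. f y = 1}"
    obtain c1 w1 where 1: "p1 = (c1, w1)" by force
    obtain c2 w2 where 2: "p2 = (c2, w2)" by force
    show "((\<lambda>(c, w). w + (c - 1) *s a') p1 = (\<lambda>(c, w). w + (c - 1) *s a') p2) = (p1 = p2)"
    proof
      assume eq: "(\<lambda>(c, w). w + (c - 1) *s a') p1 = (\<lambda>(c, w). w + (c - 1) *s a') p2"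
      hence e: "w1 + (c1 - 1) *s a' = w2 + (c2 - 1) *s a'" using 1 2 by simp
      hence "f (w1 + (c1 - 1) *s a') = f (w2 + (c2 - 1) *s a')" by simp
      hence "c1 = c2" using p 1 2 by (simp add: add scl fa')
      then show "p1 = p2" using e 1 2 by simp
    qed simp
  next
    fix p assume pin: "p \<in> (UNIV::'a set) \<times> {y \<in> S. f y = 1}"
    show "(\<lambda>(c, w). w + (c - 1) *s a') p \<in> S"
      using pin a'S S by (auto simp: vec.subspace_add vec.subspace_scale)
  next
    fix y assume y: "y \<in> S"
    have "y - (f y - 1) *s a' \<in> S" using y a'S S by (simp add: vec.subspace_diff vec.subspace_scale)
    moreover have "f (y - (f y - 1) *s a') = 1" by (simp add: fsub scl fa')
    ultimately show "\<exists>p \<in> (UNIV::'a set) \<times> {y \<in> S. f y = 1}. y = (\<lambda>(c, w). w + (c - 1) *s a') p"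
      by (intro bexI[of _ "(f y, y - (f y - 1) *s a')"]) auto
  qed
  show ?thesis using bij_betw_same_card[OF bij] by (simp add: card_cartesian_product)
qed

lemma double_count:
  assumes "finite A" "finite C"
  shows "(\<Sum>a\<in>A. card {c\<in>C. r a c}) = (\<Sum>c\<in>C. card {a\<in>A. r a c})"
proof -
  have "(\<Sum>a\<in>A. card {c\<in>C. r a c}) = (\<Sum>a\<in>A. \<Sum>c\<in>C. if r a c then 1 else 0)"
    using assms by (simp add: sum.inter_filter[symmetric])
  also have "\<dots> = (\<Sum>c\<in>C. \<Sum>a\<in>A. if r a c then 1 else 0)" by (rule sum.swap)
  also have "\<dots> = (\<Sum>c\<in>C. card {a\<in>A. r a c})"
    using assms by (simp add: sum.inter_filter[symmetric])
  finally show ?thesis .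
qed

lemma coprime_pow_minus:
  fixes q m :: nat assumes "m \<ge> 1" "q \<ge> 1"
  shows "coprime q (q ^ m - 1)"
proof (rule coprimeI)
  fix d assume d1: "d dvd q" and d2: "d dvd q ^ m - 1"
  have "d dvd q ^ m" using d1 assms by (simp add: dvd_power_iff_le dvd_trans[OF d1] )
  hence "d dvd q ^ m - (q ^ m - 1)" using d2 by (simp add: dvd_diff_nat)
  moreover have "q ^ m - (q ^ m - 1) = 1" using assms by simp
  ultimately show "is_unit d" by simp
qed

lemma indep_single: "x \<noteq> 0 \<Longrightarrow> vec.independent {x}"
  by (simp add: vec.independent_insert vec.span_empty)

theorem lemma7:
  fixes G B :: "('a::{finite,field} ^ 'n) set set"
    and g k lam :: nat
  assumes "is_q_GDD g k lam G B"
    and "2 \<le> g" and "g \<le> k"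
  shows "CARD('a) ^ (k - g) dvd lam"
proof -
  define q where "q = CARD('a)"
  have q2: "q \<ge> 2" 
  proof -
    have "card {0::'a, 1} \<le> card (UNIV::'a set)" by (rule card_mono) auto
    thus ?thesis unfolding q_def by simp
  qed
  note D = assms(1)[unfolded is_q_GDD_def]
  have Gsub: "\<And>X. X \<in> G \<Longrightarrow> vec.subspace X \<and> vec.dim X = g"
    using D by (auto simp: subspaces_of_dim_def)
  have Bsub: "\<And>b. b \<in> B \<Longrightarrow> vec.subspace b \<and> vec.dim b = k"
    using D by (auto simp: subspaces_of_dim_def)
  have Gpt: "\<And>P. vec.subspace P \<Longrightarrow> vec.dim P = 1 \<Longrightarrow> \<exists>!X. X \<in> G \<and> P \<subseteq> X"
    using D by (auto simp: subspaces_of_dim_def)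
  have Lc: "\<And>L. vec.subspace L \<Longrightarrow> vec.dim L = 2 \<Longrightarrow>
        ((\<exists>!X. X \<in> G \<and> L \<subseteq> X) \<and> (\<forall>b \<in> B. \<not> L \<subseteq> b)) \<or>
        ((\<forall>X \<in> G. \<not> L \<subseteq> X) \<and> card {b \<in> B. L \<subseteq> b} = lam)"
    using D by (auto simp: subspaces_of_dim_def)
  have "card G > 1" using D by simp
  then obtain X0 X1 where X: "X0 \<in> G" "X1 \<in> G" "X0 \<noteq> X1"
  proof -
    have "finite G" by simp
    from \<open>card G > 1\<close> have "\<not> card G \<le> Suc 0" by simp
    then show ?thesis using card_le_Suc0_iff_eq[OF \<open>finite G\<close>] that by blast
  qed
  have cardX: "card X = q ^ g" if "X \<in> G" for X
    using card_subspace[of X] Gsub[OF that] unfolding q_def by simp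
  have nz: "\<exists>x \<in> X. x \<noteq> 0" if "X \<in> G" for X
  proof (rule ccontr)
    assume "\<not> ?thesis"
    hence "X \<subseteq> {0}" by auto
    hence "card X \<le> 1" using card_mono[of "{0}" X] by simp
    moreover have "q ^ g \<ge> q ^ 2" using q2 assms(2) by (simp add: power_increasing)
    moreover have "q ^ 2 \<ge> 4" using mult_le_mono[OF q2 q2] by (simp add: power2_eq_square)
    ultimately show False using cardX[OF that] by simp
  qed
  have span1: "vec.subspace (vec.span {x}) \<and> vec.dim (vec.span {x}) = 1" if "x \<noteq> 0" for x :: "'a ^ 'n"
    using indep_single[OF that] vec.dim_eq_card_independent by (simp add: vec.subspace_span)
  obtain x where x: "x \<in> X0" "x \<noteq> 0" using nz X(1) by blast
  define P where "P = vec.span {x}"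
  have PX0: "P \<subseteq> X0" unfolding P_def using x Gsub[OF X(1)] by (simp add: vec.span_minimal)
  have uniq: "\<And>X. X \<in> G \<Longrightarrow> P \<subseteq> X \<Longrightarrow> X = X0"
    using Gpt[of P] span1[OF x(2)] PX0 X(1) unfolding P_def by blast
  define v where "v = vec.dim (UNIV :: ('a ^ 'n) set)"
  have cardU: "card (UNIV :: ('a ^ 'n) set) = q ^ v"
    unfolding v_def q_def by (rule card_subspace) (rule vec.subspace_UNIV)
  have "X0 \<noteq> UNIV"
  proof
    assume U: "X0 = UNIV"
    obtain x1 where x1: "x1 \<in> X1" "x1 \<noteq> 0" using nz X(2) by blast
    have "vec.span {x1} \<subseteq> X1" using x1 Gsub[OF X(2)] by (simp add: vec.span_minimal)
    moreover have "vec.span {x1} \<subseteq> X0" using U by simp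
    ultimately show False using Gpt[of "vec.span {x1}"] span1[OF x1(2)] X by blast
  qed
  hence "card X0 < card (UNIV :: ('a ^ 'n) set)" by (intro psubset_card_mono) auto
  hence "q ^ g < q ^ v" using cardX[OF X(1)] cardU by simp
  hence gv: "g < v" using q2 by (simp add: power_less_imp_less_exp)
  have "card P = q" using card_subspace[of P] span1[OF x(2)] unfolding P_def q_def by simp
  moreover have "q < q ^ g" 
  proof -
    have "q ^ 1 < q ^ g" using q2 assms(2) by (intro power_strict_increasing) auto
    thus ?thesis by simp
  qed
  ultimately have "\<not> X0 \<subseteq> P" using cardX[OF X(1)] card_mono[of P X0] by auto
  then obtain z where z: "z \<in> X0" "z \<notin> P" by blast
  have indzx: "vec.independent {z, x}"
    using z indep_single[OF x(2)] unfolding P_def by (simp add: vec.independent_insert)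
  define E where "E = vec.extend_basis {z, x}"
  have Eind: "vec.independent E" and ES: "{z, x} \<subseteq> E"
    using vec.independent_extend_basis[OF indzx] vec.extend_basis_superset[OF indzx] unfolding E_def by auto
  have Espan: "vec.span E = UNIV" using indzx unfolding E_def by simp
  define f where "f y = vec.representation E y z" for y
  have fadd: "f (u + w) = f u + f w" for u w
    unfolding f_def using vec.representation_add[OF Eind] Espan by simp
  have fscl: "f (c *s u) = c * f u" for c u
    unfolding f_def using vec.representation_scale[OF Eind] Espan by simp
  have xz: "x \<noteq> z" using z x unfolding P_def by (auto intro: vec.span_base)
  have fz: "f z = 1" unfolding f_def using vec.representation_basis[OF Eind] ES by auto
  have fx: "f x = 0" unfolding f_def using vec.representation_basis[OF Eind] ES xz by auto
  have fP: "\<And>y. y \<in> P \<Longrightarrow> f y = 0" unfolding P_def vec.span_singleton using fx fscl by auto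
  have q0: "q > 0" using q2 by simp
  have cY: "card {y. f y = 1} = q ^ (v - 1)"
  proof -
    have "q ^ v = q * card {y \<in> UNIV. f y = 1}"
      using fiber_card[OF fadd fscl vec.subspace_UNIV, of z] fz cardU unfolding q_def by simp
    moreover have "q ^ v = q * q ^ (v - 1)" using gv by (cases v) auto
    ultimately show ?thesis using q0 by simp
  qed
  have cYX: "card {y \<in> X0. f y = 1} = q ^ (g - 1)"
  proof -
    have "q ^ g = q * card {y \<in> X0. f y = 1}"
      using fiber_card[OF fadd fscl _ z(1)] Gsub[OF X(1)] fz cardX[OF X(1)] unfolding q_def by simp
    moreover have "q ^ g = q * q ^ (g - 1)" using assms(2) by (cases g) auto
    ultimately show ?thesis using q0 by simp
  qed
  define Y where "Y = {y. f y = 1}"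
  define Bp where "Bp = {b \<in> B. P \<subseteq> b}"
  have finB: "finite Bp" "finite Y" by simp_all
  have lineY: "card {b \<in> Bp. y \<in> b} = (if y \<in> X0 then 0 else lam)" if yY: "y \<in> Y" for y
  proof -
    define L where "L = vec.span {y, x}"
    have "y \<notin> P" using fP yY unfolding Y_def by auto
    hence indyx: "vec.independent {y, x}"
      using indep_single[OF x(2)] unfolding P_def by (simp add: vec.independent_insert)
    have yx: "y \<noteq> x" using \<open>y \<notin> P\<close> unfolding P_def by (auto intro: vec.span_base)
    have Lsub: "vec.subspace L" unfolding L_def by (simp add: vec.subspace_span)
    have Ldim: "vec.dim L = 2" unfolding L_def
      using vec.dim_eq_card_independent[OF indyx] yx by simp
    have PL: "P \<subseteq> L" unfolding P_def L_def by (intro vec.span_mono) auto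
    have yL: "y \<in> L" unfolding L_def by (intro vec.span_base) auto
    have eqs: "{b \<in> Bp. y \<in> b} = {b \<in> B. L \<subseteq> b}"
    proof (intro Collect_cong iffI)
      fix b assume "b \<in> Bp \<and> y \<in> b"
      hence b: "b \<in> B" "P \<subseteq> b" "y \<in> b" unfolding Bp_def by auto
      have "x \<in> b" using b(2) unfolding P_def by (meson subsetD vec.span_base singletonI)
      hence "L \<subseteq> b" unfolding L_def using b Bsub[OF b(1)] by (intro vec.span_minimal) auto
      then show "b \<in> B \<and> L \<subseteq> b" using b by simp
    next
      fix b assume "b \<in> B \<and> L \<subseteq> b"
      then show "b \<in> Bp \<and> y \<in> b" unfolding Bp_def using PL yL by auto
    qed
    show ?thesis
    proof (cases "y \<in> X0")
      case True
      have "L \<subseteq> X0" unfolding L_def using True x(1) Gsub[OF X(1)] by (intro vec.span_minimal) auto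
      hence "\<forall>b \<in> B. \<not> L \<subseteq> b" using Lc[OF Lsub Ldim] X(1) by blast
      then show ?thesis using True eqs by simp
    next
      case False
      have "\<not> (\<exists>X. X \<in> G \<and> L \<subseteq> X)"
      proof
        assume "\<exists>X. X \<in> G \<and> L \<subseteq> X"
        then obtain X where "X \<in> G" "L \<subseteq> X" by blast
        hence "X = X0" using uniq PL by blast
        with \<open>L \<subseteq> X\<close> yL False show False by blast
      qed
      hence "card {b \<in> B. L \<subseteq> b} = lam" using Lc[OF Lsub Ldim] by blast
      then show ?thesis using False eqs by simp
    qed
  qed
  have blockc: "card {y \<in> Y. y \<in> b} = (if \<exists>y\<in>b. f y \<noteq> 0 then q ^ (k - 1) else 0)" if bB: "b \<in> Bp" for b
  proof (cases "\<exists>y\<in>b. f y \<noteq> 0")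
    case True
    then obtain a where a: "a \<in> b" "f a \<noteq> 0" by blast
    have bs: "vec.subspace b" "vec.dim b = k" using Bsub bB unfolding Bp_def by auto
    have "q ^ k = q * card {y \<in> b. f y = 1}"
      using fiber_card[OF fadd fscl bs(1) a] card_subspace[OF bs(1)] bs(2) unfolding q_def by simp
    moreover have "q ^ k = q * q ^ (k - 1)" using assms(2,3) by (cases k) auto
    moreover have "{y \<in> Y. y \<in> b} = {y \<in> b. f y = 1}" unfolding Y_def by auto
    ultimately show ?thesis using True q0 by simp
  next
    case False
    hence "{y \<in> Y. y \<in> b} = {}" unfolding Y_def by auto
    then show ?thesis using False by simp
  qed
  define N where "N = card {b \<in> Bp. \<exists>y\<in>b. f y \<noteq> 0}"
  have "(\<Sum>b\<in>Bp. card {y \<in> Y. y \<in> b}) = (\<Sum>y\<in>Y. card {b \<in> Bp. y \<in> b})"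
    by (rule double_count[OF finB])
  also have "(\<Sum>b\<in>Bp. card {y \<in> Y. y \<in> b}) = (\<Sum>b\<in>Bp. if \<exists>y\<in>b. f y \<noteq> 0 then q ^ (k - 1) else 0)"
    using blockc by (rule sum.cong[OF refl])
  also have "\<dots> = N * q ^ (k - 1)"
    unfolding N_def using finB by (simp add: sum.inter_filter[symmetric])
  also have "(\<Sum>y\<in>Y. card {b \<in> Bp. y \<in> b}) = (\<Sum>y\<in>Y. if y \<in> X0 then 0 else lam)"
    using lineY by (rule sum.cong[OF refl])
  also have "\<dots> = card {y \<in> Y. y \<notin> X0} * lam"
  proof -
    have "Y \<inter> - X0 = {y \<in> Y. y \<notin> X0}" by auto
    then show ?thesis using finB by (simp add: sum.If_cases)
  qed
  finally have eq1: "N * q ^ (k - 1) = card {y \<in> Y. y \<notin> X0} * lam" .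
  have "card Y = card {y \<in> Y. y \<in> X0} + card {y \<in> Y. y \<notin> X0}"
  proof -
    have "Y = {y \<in> Y. y \<in> X0} \<union> {y \<in> Y. y \<notin> X0}" by auto
    hence "card Y = card ({y \<in> Y. y \<in> X0} \<union> {y \<in> Y. y \<notin> X0})" by simp
    also have "\<dots> = card {y \<in> Y. y \<in> X0} + card {y \<in> Y. y \<notin> X0}"
      by (rule card_Un_disjoint) auto
    finally show ?thesis .
  qed
  moreover have "{y \<in> Y. y \<in> X0} = {y \<in> X0. f y = 1}" unfolding Y_def by auto
  ultimately have "card {y \<in> Y. y \<notin> X0} = q ^ (v - 1) - q ^ (g - 1)"
    using cY cYX unfolding Y_def by simp
  with eq1 have eq2: "N * q ^ (k - 1) = (q ^ (v - 1) - q ^ (g - 1)) * lam" by simp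
  have "q ^ (k - 1) = q ^ (g - 1) * q ^ (k - g)" using assms(2,3) by (simp add: power_add[symmetric])
  moreover have "q ^ (v - 1) - q ^ (g - 1) = q ^ (g - 1) * (q ^ (v - g) - 1)"
    using gv assms(2) by (simp add: power_add[symmetric] diff_mult_distrib2)
  ultimately have "q ^ (g - 1) * (N * q ^ (k - g)) = q ^ (g - 1) * ((q ^ (v - g) - 1) * lam)"
    using eq2 by (simp add: ac_simps)
  hence "N * q ^ (k - g) = (q ^ (v - g) - 1) * lam" using q0 by simp
  hence dv: "q ^ (k - g) dvd (q ^ (v - g) - 1) * lam" by (metis dvd_triv_right)
  have "coprime q (q ^ (v - g) - 1)" using gv q0 by (intro coprime_pow_minus) auto
  hence "coprime (q ^ (k - g)) (q ^ (v - g) - 1)" by simp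
  with dv show ?thesis unfolding q_def by (simp add: coprime_dvd_mult_right_iff)
qed

end
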